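(* Let $p$ be a prime and $N(x)=1+x+\dots+x^{p-1}$. Let $\mathfrak{K}$ be the $\mathbb{Z}/2$-graded ring generated by $u_0,u_1,u_2$ and $\alpha_{jk}$ for $j,k\in\{0,1,2\}$, $j\neq k$, subject to the relations $u_ju_k=\delta_{j,k}u_j$; $u_0+u_1+u_2=1$; $u_j\alpha_{jk}u_k=\alpha_{jk}$; $\alpha_{jk}\alpha_{km}=0$ whenever $\{j,k,m\}=\{0,1,2\}$; $\alpha_{01}\alpha_{10}=N(u_0-\alpha_{02}\alpha_{20})$; $\alpha_{10}\alpha_{01}=N(u_1-\alpha_{12}\alpha_{21})$; $p\,u_2=N(u_2-\alpha_{20}\alpha_{02})+N(u_2-\alpha_{21}\alpha_{12})$; where $\alpha_{12},\alpha_{21}$ are odd and all other generators even (polynomials $N(x)$ in an element $x$ of the corner $u_j\mathfrak{K}u_j$ are formed with $u_j$ as unit). Then there is a unique ring anti-automorphism $x\mapsto x^*$ of $\mathfrak{K}$ with $u_j^*=u_j$ and $\alpha_{jk}^*=\alpha_{kj}$ for all $j,k\in\{0,1,2\}$ with $j\neq k$. It is grading-preserving and involutive.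
   Context: The ring $\mathfrak{K}$ so presented is (by a result of the paper) isomorphic to Köhler's ring $\mathrm{KK}^G_*(B,B)^{\mathrm{op}}$ for $G=\mathbb{Z}/p$ and $B=\mathbb{C}\oplus\mathrm{C}(G)\oplus D$, $D$ the mapping cone of the unit map $\mathbb{C}\to\mathrm{C}(G)$; the statement concerns the ring with the presentation given. *)

theory Defs
  imports "HOL-Library.Poly_Mapping" "HOL-Algebra.QuotRing" "HOL-Computational_Algebra.Primes"
begin

datatype 'a fword = FW "'a list"

instantiation fword :: (type) monoid_add
begin
definition zero_fword :: "'a fword" where "zero_fword = FW []"
fun plus_fword :: "'a fword \<Rightarrow> 'a fword \<Rightarrow> 'a fword" where
  "plus_fword (FW a) (FW b) = FW (a @ b)"
instance
proof
  fix a b c :: "'a fword"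
  show "a + b + c = a + (b + c)" by (cases a; cases b; cases c) simp
  show "0 + a = a" by (cases a) (simp add: zero_fword_def)
  show "a + 0 = a" by (cases a) (simp add: zero_fword_def)
qed
end

datatype gen = U0 | U1 | U2 | A01 | A02 | A10 | A12 | A20 | A21

fun ug :: "nat \<Rightarrow> gen" where
  "ug 0 = U0" | "ug (Suc 0) = U1" | "ug _ = U2"

(* only used for j, k < 3 with j \<noteq> k *)
fun ag :: "nat \<Rightarrow> nat \<Rightarrow> gen" where
  "ag 0 (Suc 0) = A01" | "ag 0 (Suc (Suc 0)) = A02" | "ag (Suc 0) 0 = A10"
| "ag (Suc 0) (Suc (Suc 0)) = A12" | "ag (Suc (Suc 0)) 0 = A20"
| "ag (Suc (Suc 0)) (Suc 0) = A21" | "ag _ _ = U0"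

definition odd_gen :: "gen \<Rightarrow> bool" where
  "odd_gen g \<longleftrightarrow> g = A12 \<or> g = A21"

fun wpar :: "gen fword \<Rightarrow> nat" where
  "wpar (FW ws) = length (filter odd_gen ws) mod 2"

type_synonym fr = "gen fword \<Rightarrow>\<^sub>0 int"

definition X :: "gen \<Rightarrow> fr" where
  "X g = Poly_Mapping.single (FW [g]) 1"

definition Fr :: "fr ring" where
  "Fr = \<lparr>carrier = UNIV, monoid.mult = (*), one = 1, zero = 0, add = (+)\<rparr>"

text \<open>N(x) = 1 + x + ... + x^(p-1), formed with unit e (the corner unit u_j).\<close>
definition Npoly :: "nat \<Rightarrow> fr \<Rightarrow> fr \<Rightarrow> fr" where
  "Npoly p e x = e + (\<Sum>i\<in>{1..<p}. x ^ i)"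

abbreviation u :: "nat \<Rightarrow> fr" where "u j \<equiv> X (ug j)"
abbreviation \<alpha> :: "nat \<Rightarrow> nat \<Rightarrow> fr" where "\<alpha> j k \<equiv> X (ag j k)"

definition Rel :: "nat \<Rightarrow> fr set" where
  "Rel p =
     {u j * u k - (if j = k then u j else 0) | j k. j < 3 \<and> k < 3}
   \<union> {u 0 + u 1 + u 2 - 1}
   \<union> {u j * \<alpha> j k * u k - \<alpha> j k | j k. j < 3 \<and> k < 3 \<and> j \<noteq> k}
   \<union> {\<alpha> j k * \<alpha> k m | j k m. {j, k, m} = {0, 1, 2::nat}}
   \<union> {\<alpha> 0 1 * \<alpha> 1 0 - Npoly p (u 0) (u 0 - \<alpha> 0 2 * \<alpha> 2 0),
      \<alpha> 1 0 * \<alpha> 0 1 - Npoly p (u 1) (u 1 - \<alpha> 1 2 * \<alpha> 2 1),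
      of_nat p * u 2 - (Npoly p (u 2) (u 2 - \<alpha> 2 0 * \<alpha> 0 2)
                        + Npoly p (u 2) (u 2 - \<alpha> 2 1 * \<alpha> 1 2))}"

definition KI :: "nat \<Rightarrow> fr set" where
  "KI p = genideal Fr (Rel p)"

definition K :: "nat \<Rightarrow> fr set ring" where
  "K p = Fr Quot KI p"

definition cls :: "nat \<Rightarrow> fr \<Rightarrow> fr set" where
  "cls p f = KI p +>\<^bsub>Fr\<^esub> f"

definition Kdeg :: "nat \<Rightarrow> nat \<Rightarrow> fr set set" where
  "Kdeg p d = {cls p f | f. \<forall>w \<in> Poly_Mapping.keys f. wpar w = d}"

definition ring_antiaut :: "('a, 'b) ring_scheme \<Rightarrow> ('a \<Rightarrow> 'a) \<Rightarrow> bool" where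
  "ring_antiaut R f \<longleftrightarrow>
     bij_betw f (carrier R) (carrier R)
   \<and> (\<forall>x \<in> carrier R. \<forall>y \<in> carrier R.
        f (x \<oplus>\<^bsub>R\<^esub> y) = f x \<oplus>\<^bsub>R\<^esub> f y \<and> f (x \<otimes>\<^bsub>R\<^esub> y) = f y \<otimes>\<^bsub>R\<^esub> f x)
   \<and> f \<one>\<^bsub>R\<^esub> = \<one>\<^bsub>R\<^esub>"

definition star_on_gens :: "nat \<Rightarrow> (fr set \<Rightarrow> fr set) \<Rightarrow> bool" where
  "star_on_gens p f \<longleftrightarrow>
     (\<forall>j < 3. f (cls p (u j)) = cls p (u j))
   \<and> (\<forall>j < 3. \<forall>k < 3. j \<noteq> k \<longrightarrow> f (cls p (\<alpha> j k)) = cls p (\<alpha> k j))"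

end

theory Submission
  imports Defs
begin

fun gs :: "gen \<Rightarrow> gen" where
  "gs U0 = U0" | "gs U1 = U1" | "gs U2 = U2" | "gs A01 = A10" | "gs A10 = A01"
| "gs A02 = A20" | "gs A20 = A02" | "gs A12 = A21" | "gs A21 = A12"

lemma gs_gs [simp]: "gs (gs g) = g" by (cases g) auto

fun wstar :: "gen fword \<Rightarrow> gen fword" where
  "wstar (FW ws) = FW (rev (map gs ws))"

lemma wstar_wstar [simp]: "wstar (wstar w) = w"
  by (cases w) (simp add: rev_map comp_def)

lemma wstar_plus: "wstar (a + b) = wstar b + wstar a"
  by (cases a; cases b) simp

lemma wstar_zero [simp]: "wstar 0 = 0"
  by (simp add: zero_fword_def)

lemma wpar_wstar [simp]: "wpar (wstar w) = wpar w"
proof (cases w)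
  case (FW ws)
  have "odd_gen (gs g) = odd_gen g" for g by (cases g) (auto simp: odd_gen_def)
  then have "filter odd_gen (map gs ws) = map gs (filter odd_gen ws)"
    by (induct ws) auto
  then show ?thesis using FW by (simp add: rev_filter[symmetric])
qed

definition sig :: "fr \<Rightarrow> fr" where
  "sig c = frag_extend (\<lambda>w. frag_of (wstar w)) c"

lemma sig_0 [simp]: "sig 0 = 0" by (simp add: sig_def)
lemma sig_of [simp]: "sig (frag_of w) = frag_of (wstar w)" by (simp add: sig_def)
lemma sig_add: "sig (a + b) = sig a + sig b" by (simp add: sig_def frag_extend_add)
lemma sig_diff: "sig (a - b) = sig a - sig b" by (simp add: sig_def frag_extend_diff)
lemma sig_minus: "sig (- a) = - sig a" by (simp add: sig_def frag_extend_minus)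

lemma fr_induct[case_names zero one diff]:
  "P 0 \<Longrightarrow> (\<And>x. P (frag_of x)) \<Longrightarrow> (\<And>a b. P a \<Longrightarrow> P b \<Longrightarrow> P (a-b)) \<Longrightarrow> P (c::'a\<Rightarrow>\<^sub>0int)"
  by (rule frag_induction[OF subset_UNIV]) auto

lemma sig_sig [simp]: "sig (sig c) = c"
  by (induction c rule: fr_induct) (simp_all add: sig_diff)

lemma sig_one [simp]: "sig 1 = 1"
proof -
  have "sig (frag_of 0) = frag_of (wstar 0)" by (rule sig_of)
  then show ?thesis by simp
qed

lemma sig_X [simp]: "sig (X g) = X (gs g)"
  by (simp add: X_def)

lemma sig_mult: "sig (a * b) = sig b * sig a"
proof (induction a rule: fr_induct)
  case (one v)
  show ?case
  proof (induction b rule: fr_induct)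
    case (one w)
    then show ?case by (simp add: mult_single wstar_plus)
  next
    case (diff a b)
    then show ?case by (simp add: sig_diff right_diff_distrib left_diff_distrib)
  qed simp
next
  case (diff a c)
  then show ?case by (simp add: sig_diff right_diff_distrib left_diff_distrib)
qed simp

lemma sig_pow: "sig (x ^ n) = sig x ^ n"
  by (induction n) (simp_all add: sig_mult power_commutes)

lemma sig_sum: "finite A \<Longrightarrow> sig (\<Sum>i\<in>A. f i) = (\<Sum>i\<in>A. sig (f i))"
  by (induction A rule: finite_induct) (simp_all add: sig_add)

lemma sig_of_nat [simp]: "sig (of_nat n) = of_nat n"
  by (induction n) (simp_all add: sig_add)

lemma sig_Npoly: "sig (Npoly p e x) = Npoly p (sig e) (sig x)"
  by (simp add: Npoly_def sig_add sig_sum sig_pow)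

lemma keys_sig: "Poly_Mapping.keys (sig c) \<subseteq> wstar ` Poly_Mapping.keys c"
  unfolding sig_def using keys_frag_extend[of "\<lambda>w. frag_of (wstar w)" c] by auto

lemma ring_Fr: "ring Fr"
proof (rule ringI)
  show "abelian_group Fr"
    by (rule abelian_groupI) (auto simp: Fr_def algebra_simps intro: exI[of _ "- x" for x])
  show "Group.monoid Fr"
    by (rule monoidI) (auto simp: Fr_def algebra_simps)
qed (auto simp: Fr_def algebra_simps)

lemma gs_ug [simp]: "gs (ug j) = ug j"
  by (cases j rule: ug.cases) auto

lemma gs_ag [simp]: "gs (ag j k) = ag k j"
  by (induction j k rule: ag.induct) auto

lemma sig_u [simp]: "sig (u j) = u j" by simp
lemma sig_alpha [simp]: "sig (\<alpha> j k) = \<alpha> k j" by simp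

lemma Fr_simps [simp]: "carrier Fr = UNIV" "add Fr = (+)" "monoid.mult Fr = (*)" "one Fr = 1" "zero Fr = 0"
  by (simp_all add: Fr_def)

lemma Fr_inv: "m_inv (add_monoid Fr) a = - a"
proof -
  interpret abelian_group Fr using ring_Fr ring.is_abelian_group by blast
  have "a_inv Fr a = - a" by (rule minus_equality) simp_all
  then show ?thesis by (simp add: a_inv_def)
qed

lemma sig_Rel:
  assumes "r \<in> Rel p" shows "sig r \<in> Rel p"
proof -
  from assms consider
    (1) j k where "r = u j * u k - (if j = k then u j else 0)" "j<3" "k<3"
  | (2) "r = u 0 + u 1 + u 2 - 1"
  | (3) j k where "r = u j * \<alpha> j k * u k - \<alpha> j k" "j<3" "k<3" "j\<noteq>k"
  | (4) j k m where "r = \<alpha> j k * \<alpha> k m" "{j,k,m} = {0,1,2::nat}"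
  | (5) "r = \<alpha> 0 1 * \<alpha> 1 0 - Npoly p (u 0) (u 0 - \<alpha> 0 2 * \<alpha> 2 0)"
  | (6) "r = \<alpha> 1 0 * \<alpha> 0 1 - Npoly p (u 1) (u 1 - \<alpha> 1 2 * \<alpha> 2 1)"
  | (7) "r = of_nat p * u 2 - (Npoly p (u 2) (u 2 - \<alpha> 2 0 * \<alpha> 0 2)
                        + Npoly p (u 2) (u 2 - \<alpha> 2 1 * \<alpha> 1 2))"
    unfolding Rel_def by blast
  then show ?thesis
  proof cases
    case 1
    then have "sig r = u k * u j - (if k = j then u k else 0)" by (auto simp: sig_diff sig_mult)
    with 1 show ?thesis unfolding Rel_def by blast
  next
    case 2
    then have "sig r = r" by (simp add: sig_diff sig_add)
    with 2 show ?thesis unfolding Rel_def by blast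
  next
    case 3
    then have "sig r = u k * \<alpha> k j * u j - \<alpha> k j" by (simp add: sig_diff sig_mult mult.assoc)
    with 3 show ?thesis unfolding Rel_def by blast
  next
    case 4
    then have "sig r = \<alpha> m k * \<alpha> k j" by (simp add: sig_mult)
    moreover have "{m,k,j} = {0,1,2::nat}" using 4 by (simp add: insert_commute)
    ultimately show ?thesis unfolding Rel_def by blast
  next
    case 5
    then have "sig r = r" by (simp add: sig_diff sig_mult sig_Npoly)
    with 5 show ?thesis unfolding Rel_def by blast
  next
    case 6
    then have "sig r = r" by (simp add: sig_diff sig_mult sig_Npoly)
    with 6 show ?thesis unfolding Rel_def by blast
  next
    case 7
    then have "sig r = r" by (simp add: sig_diff sig_mult sig_Npoly sig_add mult_of_nat_commute)
    with 7 show ?thesis unfolding Rel_def by blast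
  qed
qed

lemma ideal_KI: "ideal (KI p) Fr"
  unfolding KI_def by (rule ring.genideal_ideal[OF ring_Fr]) simp

lemma sig_KI: "x \<in> KI p \<Longrightarrow> sig x \<in> KI p"
proof -
  interpret I: ideal "KI p" Fr by (rule ideal_KI)
  let ?J = "{x. sig x \<in> KI p}"
  have grp: "group (add_monoid Fr)"
    using ring_Fr ring.is_abelian_group abelian_group.a_group by blast
  have "subgroup ?J (add_monoid Fr)"
  proof (rule group.subgroupI[OF grp])
    show "?J \<noteq> {}" using I.additive_subgroup_axioms additive_subgroup.zero_closed[of "KI p" Fr]
      by (metis (mono_tags, lifting) Fr_simps(5) empty_Collect_eq sig_0)
    fix a b assume a: "a \<in> ?J" and b: "b \<in> ?J"
    have "a_inv Fr (sig a) = - sig a" using Fr_inv by (simp only: a_inv_def)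
    then have "- sig a \<in> KI p" using additive_subgroup.a_inv_closed[OF I.additive_subgroup_axioms, of "sig a"] a by simp
    then show "m_inv (add_monoid Fr) a \<in> ?J"
      unfolding Fr_inv by (simp add: sig_minus)
    show "a \<otimes>\<^bsub>add_monoid Fr\<^esub> b \<in> ?J"
      using a b additive_subgroup.a_closed[OF I.additive_subgroup_axioms, of "sig a" "sig b"] by (simp add: sig_add)
  qed simp
  then have "ideal ?J Fr"
  proof (rule idealI[OF ring_Fr])
    fix a x assume "a \<in> ?J" "x \<in> carrier Fr"
    then show "x \<otimes>\<^bsub>Fr\<^esub> a \<in> ?J" "a \<otimes>\<^bsub>Fr\<^esub> x \<in> ?J"
      using I.I_l_closed I.I_r_closed by (auto simp: sig_mult)
  qed
  moreover have "Rel p \<subseteq> ?J"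
    using sig_Rel ring.genideal_self[OF ring_Fr, of "Rel p"] unfolding KI_def by auto
  ultimately have "KI p \<subseteq> ?J"
    unfolding KI_def by (rule ring.genideal_minimal[OF ring_Fr])
  then show "x \<in> KI p \<Longrightarrow> sig x \<in> KI p" by blast
qed

lemma sig_image_KI: "sig ` KI p = KI p"
proof
  show "sig ` KI p \<subseteq> KI p" using sig_KI by blast
  show "KI p \<subseteq> sig ` KI p"
  proof
    fix x assume "x \<in> KI p"
    then have "sig (sig x) = x" "sig x \<in> KI p" using sig_KI by auto
    then show "x \<in> sig ` KI p" by (metis image_eqI)
  qed
qed

lemma cls_eq: "cls p a = (\<lambda>h. h + a) ` KI p"
  unfolding cls_def a_r_coset_def' by auto

lemma sig_cls: "sig ` cls p a = cls p (sig a)"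
proof -
  have "sig ` cls p a = (\<lambda>h. h + sig a) ` (sig ` KI p)"
    unfolding cls_eq image_image by (simp add: sig_add)
  also have "\<dots> = cls p (sig a)" unfolding sig_image_KI cls_eq by auto
  finally show ?thesis .
qed


lemma cls_hom: "cls p \<in> ring_hom Fr (K p)"
proof -
  have "cls p = (+>\<^bsub>Fr\<^esub>) (KI p)" by (rule ext) (simp add: cls_def)
  then show ?thesis unfolding K_def using ideal.rcos_ring_hom[OF ideal_KI] by simp
qed

lemma ring_K: "ring (K p)"
  unfolding K_def by (rule ideal.quotient_is_ring[OF ideal_KI])

lemma carrier_K: "carrier (K p) = range (cls p)"
  unfolding K_def FactRing_def A_RCOSETS_def' cls_def by auto

lemma cls_add: "cls p a \<oplus>\<^bsub>K p\<^esub> cls p b = cls p (a + b)"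
  using ring_hom_add[OF cls_hom, of a b] by simp

lemma cls_mult: "cls p a \<otimes>\<^bsub>K p\<^esub> cls p b = cls p (a * b)"
  using ring_hom_mult[OF cls_hom, of a b] by simp

lemma cls_one: "\<one>\<^bsub>K p\<^esub> = cls p 1"
  using ring_hom_one[OF cls_hom, of p] by simp

lemma cls_zero: "\<zero>\<^bsub>K p\<^esub> = cls p 0"
  using ring_hom_zero[OF cls_hom ring_Fr ring_K, of p] by simp

lemma sig_sig_img: "sig ` sig ` C = C"
  by (simp add: image_image)

lemma uniq:
  assumes g: "ring_antiaut (K p) g" "star_on_gens p g"
  shows "g (cls p a) = cls p (sig a)"
proof -
  interpret R: ring "K p" by (rule ring_K)
  have bij: "bij_betw g (carrier (K p)) (carrier (K p))" using g(1) unfolding ring_antiaut_def by blast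
  have gc: "g x \<in> carrier (K p)" if "x \<in> carrier (K p)" for x using bij that bij_betwE by blast
  have gadd: "g (x \<oplus>\<^bsub>K p\<^esub> y) = g x \<oplus>\<^bsub>K p\<^esub> g y"
    and gmul: "g (x \<otimes>\<^bsub>K p\<^esub> y) = g y \<otimes>\<^bsub>K p\<^esub> g x"
    if "x \<in> carrier (K p)" "y \<in> carrier (K p)" for x y
    using g(1) that unfolding ring_antiaut_def by blast+
  have gone: "g \<one>\<^bsub>K p\<^esub> = \<one>\<^bsub>K p\<^esub>" using g(1) unfolding ring_antiaut_def by blast
  have cc: "cls p x \<in> carrier (K p)" for x by (simp add: carrier_K)
  have gen: "g (cls p (X x)) = cls p (X (gs x))" for x
  proof -
    have u: "\<And>j. j < 3 \<Longrightarrow> g (cls p (u j)) = cls p (u j)"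
      and al: "\<And>j k. j < 3 \<Longrightarrow> k < 3 \<Longrightarrow> j \<noteq> k \<Longrightarrow> g (cls p (\<alpha> j k)) = cls p (\<alpha> k j)"
      using g(2) unfolding star_on_gens_def by blast+
    show ?thesis
      using u[of 0] u[of "Suc 0"] u[of "Suc (Suc 0)"]
        al[of 0 "Suc 0"] al[of 0 "Suc (Suc 0)"] al[of "Suc 0" 0] al[of "Suc 0" "Suc (Suc 0)"]
        al[of "Suc (Suc 0)" 0] al[of "Suc (Suc 0)" "Suc 0"]
      by (cases x) simp_all
  qed
  show ?thesis
  proof (induction a rule: fr_induct)
    case zero
    have "g \<zero>\<^bsub>K p\<^esub> \<oplus>\<^bsub>K p\<^esub> g \<zero>\<^bsub>K p\<^esub> = \<zero>\<^bsub>K p\<^esub> \<oplus>\<^bsub>K p\<^esub> g \<zero>\<^bsub>K p\<^esub>"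
      using gadd[of "\<zero>\<^bsub>K p\<^esub>" "\<zero>\<^bsub>K p\<^esub>"] gc[of "\<zero>\<^bsub>K p\<^esub>"] by simp
    then have "g \<zero>\<^bsub>K p\<^esub> = \<zero>\<^bsub>K p\<^esub>" using gc[of "\<zero>\<^bsub>K p\<^esub>"] by simp
    then show ?case by (simp add: cls_zero)
  next
    case (one w)
    show ?case
    proof (cases w)
      case (FW ws)
      show ?thesis unfolding FW
      proof (induction ws)
        case Nil
        have "frag_of (FW []) = (1::fr)" by (simp add: zero_fword_def[symmetric])
        then show ?case using gone by (simp add: cls_one)
      next
        case (Cons x ws)
        have e: "frag_of (FW (x # ws)) = X x * frag_of (FW ws)"
          by (simp add: X_def mult_single)
        have "g (cls p (frag_of (FW (x # ws)))) = g (cls p (X x) \<otimes>\<^bsub>K p\<^esub> cls p (frag_of (FW ws)))"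
          by (simp add: e cls_mult)
        also have "\<dots> = g (cls p (frag_of (FW ws))) \<otimes>\<^bsub>K p\<^esub> g (cls p (X x))"
          by (rule gmul) (simp_all add: cc)
        also have "\<dots> = cls p (sig (frag_of (FW (x # ws))))"
          using Cons gen by (simp add: e sig_mult cls_mult del: sig_of)
        finally show ?case .
      qed
    qed
  next
    case (diff a b)
    have "g (cls p (a - b)) \<oplus>\<^bsub>K p\<^esub> g (cls p b) = g (cls p a)"
      using gadd[OF cc cc, of "a - b" b] cls_add[of p "a - b" b] by simp
    also have "\<dots> = cls p (sig (a - b)) \<oplus>\<^bsub>K p\<^esub> cls p (sig b)"
      using diff by (simp add: cls_add sig_diff)
    finally have "g (cls p (a - b)) \<oplus>\<^bsub>K p\<^esub> cls p (sig b) = cls p (sig (a - b)) \<oplus>\<^bsub>K p\<^esub> cls p (sig b)"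
      using diff by simp
    then show ?case using gc[OF cc] cc by simp
  qed
qed

theorem proposition5p11:
  fixes p :: nat
  assumes "prime p"
  shows "\<exists>f. ring_antiaut (K p) f \<and> star_on_gens p f
           \<and> (\<forall>g. ring_antiaut (K p) g \<and> star_on_gens p g \<longrightarrow> (\<forall>x \<in> carrier (K p). g x = f x))
           \<and> (\<forall>d \<in> {0, 1}. \<forall>x \<in> Kdeg p d. f x \<in> Kdeg p d)
           \<and> (\<forall>x \<in> carrier (K p). f (f x) = x)"
proof (intro exI conjI ballI allI impI)
  let ?f = "\<lambda>C. sig ` C"
  have cc: "cls p x \<in> carrier (K p)" for x by (simp add: carrier_K)
  show inv: "?f (?f x) = x" for x by (rule sig_sig_img)
  show "ring_antiaut (K p) ?f"
    unfolding ring_antiaut_def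
  proof (intro conjI ballI)
    show "bij_betw ?f (carrier (K p)) (carrier (K p))"
      by (rule bij_betw_byWitness[where f' = ?f]) (auto simp: sig_sig_img carrier_K sig_cls)
    fix x y assume "x \<in> carrier (K p)" "y \<in> carrier (K p)"
    then obtain a b where ab: "x = cls p a" "y = cls p b" unfolding carrier_K by blast
    show "?f (x \<oplus>\<^bsub>K p\<^esub> y) = ?f x \<oplus>\<^bsub>K p\<^esub> ?f y"
      unfolding ab by (simp add: cls_add sig_cls sig_add)
    show "?f (x \<otimes>\<^bsub>K p\<^esub> y) = ?f y \<otimes>\<^bsub>K p\<^esub> ?f x"
      unfolding ab by (simp add: cls_mult sig_cls sig_mult)
  next
    show "?f \<one>\<^bsub>K p\<^esub> = \<one>\<^bsub>K p\<^esub>" by (simp add: cls_one sig_cls)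
  qed
  show "star_on_gens p ?f"
    unfolding star_on_gens_def by (simp add: sig_cls)
  fix g x assume g: "ring_antiaut (K p) g \<and> star_on_gens p g" and x: "x \<in> carrier (K p)"
  then obtain a where a: "x = cls p a" unfolding carrier_K by blast
  show "g x = ?f x" unfolding a using uniq[of p g a] g by (simp add: sig_cls)
next
  fix d x assume "x \<in> Kdeg p d"
  then obtain c where c: "x = cls p c" "\<forall>w \<in> Poly_Mapping.keys c. wpar w = d"
    unfolding Kdeg_def by blast
  have "\<forall>w \<in> Poly_Mapping.keys (sig c). wpar w = d" using keys_sig[of c] c(2) by auto
  then show "sig ` x \<in> Kdeg p d" unfolding Kdeg_def c(1) sig_cls by blast
qed

end
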